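(* Let $T=\sum_{\lambda\in\Lambda}c_\lambda U_\lambda$ with $\Lambda\subset\mathbb{R}^{2d}$ finite and $\Lambda\subset E_{R_0}(0)$ for some $R_0>0$. Then for every submultiplicative weight $v$ on $\mathbb{R}^{2d}$ and every integer $n\ge1$, $$\|T^n\|_{\mathcal{A}_v}\le(n+1)^{|\Lambda|/2}\,w(nR_0)\,\|T^n\|_{B(L^2(\mathbb{R}^d))},$$ where $w(a)=\sup_{\|x\|=a}v(x)$.
   Context: For $\lambda=(t,\omega)\in\mathbb{R}^d\times\mathbb{R}^d$, $U_{(t,\omega)}f(x)=e^{i\langle\omega,x\rangle}f(x-t)$ on $L^2(\mathbb{R}^d)$. $E_{R}(0)$ is the closed Euclidean ball of radius $R$ about $0$ in $\mathbb{R}^{2d}$; $|\Lambda|$ is the cardinality of $\Lambda$. A weight is a function $v:\mathbb{R}^{2d}\to[0,\infty)$ with $v(0)=1$, $v(-x)=v(x)$, radially non-decreasing; it is submultiplicative if $v(x+y)\le v(x)v(y)$ for all $x,y$. $\|T\|_{\mathcal{A}_v}:=\sum_\lambda v(\lambda)|c_\lambda|$ for $T=\sum_\lambda c_\lambda U_\lambda$. *)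

theory Defs
  imports "HOL-Analysis.Analysis"
begin

text \<open>Phase space R^d x R^d, with d = CARD('n). A point lambda = (t, omega).
  The norm on the product type is sqrt(norm t ^ 2 + norm omega ^ 2), i.e. the
  Euclidean norm of R^{2d}.\<close>

definition tfshift :: "(real^'n) \<times> (real^'n) \<Rightarrow> (real^'n \<Rightarrow> complex) \<Rightarrow> (real^'n \<Rightarrow> complex)" where
  "tfshift lam f = (\<lambda>x. exp (\<i> * complex_of_real (snd lam \<bullet> x)) * f (x - fst lam))"

definition L2 :: "(real^'n \<Rightarrow> complex) set" where
  "L2 = {f. f \<in> borel_measurable lborel \<and> integrable lborel (\<lambda>x. (cmod (f x))^2)}"

definition L2norm :: "(real^'n \<Rightarrow> complex) \<Rightarrow> real" where
  "L2norm f = sqrt (LINT x|lborel. (cmod (f x))^2)"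

definition opnorm_L2 :: "((real^'n \<Rightarrow> complex) \<Rightarrow> (real^'n \<Rightarrow> complex)) \<Rightarrow> real" where
  "opnorm_L2 S = Sup {L2norm (S f) | f. f \<in> L2 \<and> L2norm f \<le> 1}"

definition tf_op :: "((real^'n) \<times> (real^'n)) set \<Rightarrow> ((real^'n) \<times> (real^'n) \<Rightarrow> complex)
     \<Rightarrow> (real^'n \<Rightarrow> complex) \<Rightarrow> (real^'n \<Rightarrow> complex)" where
  "tf_op Lam c f = (\<lambda>x. \<Sum>lam\<in>Lam. c lam * tfshift lam f x)"

definition tf_expansion :: "((real^'n \<Rightarrow> complex) \<Rightarrow> (real^'n \<Rightarrow> complex))
     \<Rightarrow> ((real^'n) \<times> (real^'n) \<Rightarrow> complex) \<Rightarrow> bool" where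
  "tf_expansion S c \<longleftrightarrow> finite {mu. c mu \<noteq> 0} \<and>
     (\<forall>f\<in>L2. S f = tf_op {mu. c mu \<noteq> 0} c f)"

text \<open>The weighted norm ||S||_{A_v} = sum_mu v(mu) |c_mu| (the expansion is unique).\<close>
definition Av_norm :: "((real^'n) \<times> (real^'n) \<Rightarrow> real)
     \<Rightarrow> ((real^'n \<Rightarrow> complex) \<Rightarrow> (real^'n \<Rightarrow> complex)) \<Rightarrow> real" where
  "Av_norm v S = (THE a. \<exists>c. tf_expansion S c \<and> a = (\<Sum>mu\<in>{mu. c mu \<noteq> 0}. v mu * cmod (c mu)))"

definition weight :: "('a::real_normed_vector \<Rightarrow> real) \<Rightarrow> bool" where
  "weight v \<longleftrightarrow> (\<forall>x. 0 \<le> v x) \<and> v 0 = 1 \<and> (\<forall>x. v (- x) = v x) \<and>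
     (\<forall>x s t. 0 \<le> s \<and> s \<le> t \<longrightarrow> v (s *\<^sub>R x) \<le> v (t *\<^sub>R x))"

definition submultiplicative :: "('a::real_normed_vector \<Rightarrow> real) \<Rightarrow> bool" where
  "submultiplicative v \<longleftrightarrow> (\<forall>x y. v (x + y) \<le> v x * v y)"

definition sphere_sup :: "('a::real_normed_vector \<Rightarrow> real) \<Rightarrow> real \<Rightarrow> real" where
  "sphere_sup v a = Sup (v ` {x. norm x = a})"

end

theory Submission
  imports Defs
begin

lemma lint_translate:
  fixes f :: "'a::euclidean_space \<Rightarrow> 'b::{banach,second_countable_topology}"
  assumes f: "f \<in> borel_measurable borel"
  shows "integral\<^sup>L lborel (\<lambda>x. f (x - c)) = integral\<^sup>L lborel f"
proof -
  have "integral\<^sup>L lborel f = integral\<^sup>L (distr lborel borel ((+) (-c))) f"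
    by (simp add: lborel_distr_plus)
  also have "\<dots> = integral\<^sup>L lborel (\<lambda>x. f (-c + x))"
    by (rule integral_distr) (auto simp: f)
  finally show ?thesis by simp
qed

lemma integrable_translate:
  fixes f :: "'a::euclidean_space \<Rightarrow> 'b::{banach,second_countable_topology}"
  assumes f: "integrable lborel f"
  shows "integrable lborel (\<lambda>x. f (x - c))"
proof -
  have fm: "f \<in> borel_measurable borel" using borel_measurable_integrable[OF f] by simp
  have "integrable (distr lborel borel ((+) (-c))) f"
    by (simp add: lborel_distr_plus f)
  hence "integrable lborel (\<lambda>x. f (-c + x))"
    by (subst integrable_distr_eq[symmetric]) (auto simp: fm)
  thus ?thesis by simp
qed

lemma meas_shift:
  fixes f :: "real^'n \<Rightarrow> complex"
  assumes "f \<in> borel_measurable lborel"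
  shows "tfshift lam f \<in> borel_measurable lborel"
  using assms unfolding tfshift_def by measurable

lemma meas_tf_op:
  fixes f :: "real^'n \<Rightarrow> complex"
  assumes "f \<in> borel_measurable lborel"
  shows "tf_op M a f \<in> borel_measurable lborel"
  using assms meas_shift unfolding tf_op_def by measurable

lemma cmod_tfshift: "cmod (tfshift lam f x) = cmod (f (x - fst lam))"
  unfolding tfshift_def by (simp add: norm_mult)

lemma tf_op_pointwise:
  assumes "finite M"
  shows "(cmod (tf_op M a f x))^2 \<le> real (card M) * (\<Sum>mu\<in>M. (cmod (a mu))^2 * (cmod (f (x - fst mu)))^2)"
proof -
  have "cmod (tf_op M a f x) \<le> (\<Sum>mu\<in>M. cmod (a mu) * cmod (f (x - fst mu)))"
    unfolding tf_op_def
    by (rule order_trans[OF norm_sum]) (simp add: norm_mult cmod_tfshift)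
  hence "(cmod (tf_op M a f x))^2 \<le> (\<Sum>mu\<in>M. 1 * (cmod (a mu) * cmod (f (x - fst mu))))^2"
    by (simp add: power_mono)
  also have "\<dots> \<le> (\<Sum>mu\<in>M. 1^2) * (\<Sum>mu\<in>M. (cmod (a mu) * cmod (f (x - fst mu)))^2)"
    by (rule Cauchy_Schwarz_ineq_sum)
  finally show ?thesis by (simp add: power_mult_distrib)
qed

lemma tf_op_L2:
  fixes f :: "real^'n \<Rightarrow> complex"
  assumes M: "finite M" and f: "f \<in> L2"
  shows "tf_op M a f \<in> L2"
    and "(LINT x|lborel. (cmod (tf_op M a f x))^2) \<le>
          real (card M) * (\<Sum>mu\<in>M. (cmod (a mu))^2) * (LINT x|lborel. (cmod (f x))^2)"
proof -
  have fm: "f \<in> borel_measurable lborel" and fi: "integrable lborel (\<lambda>x. (cmod (f x))^2)"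
    using f by (auto simp: L2_def)
  have fmb: "(\<lambda>x. (cmod (f x))^2) \<in> borel_measurable borel"
    using fm by (simp add: measurable_lborel1) 
  let ?g = "\<lambda>x. real (card M) * (\<Sum>mu\<in>M. (cmod (a mu))^2 * (cmod (f (x - fst mu)))^2)"
  have gi: "integrable lborel ?g"
    using integrable_translate[OF fi] by (intro integrable_mult_right integrable_sum integrable_mult_right) auto
  have Tm: "tf_op M a f \<in> borel_measurable lborel" by (rule meas_tf_op[OF fm])
  have Ti: "integrable lborel (\<lambda>x. (cmod (tf_op M a f x))^2)"
    by (rule Bochner_Integration.integrable_bound[OF gi]) (use Tm in \<open>auto intro!: AE_I2 order_trans[OF tf_op_pointwise[OF M]]\<close>)
  show "tf_op M a f \<in> L2" using Tm Ti by (simp add: L2_def)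
  have "(LINT x|lborel. (cmod (tf_op M a f x))^2) \<le> integral\<^sup>L lborel ?g"
    by (rule integral_mono[OF Ti gi]) (rule tf_op_pointwise[OF M])
  also have "\<dots> = real (card M) * (\<Sum>mu\<in>M. (cmod (a mu))^2 * (LINT x|lborel. (cmod (f (x - fst mu)))^2))"
    by (subst integral_mult_right_zero) (simp add: integral_sum integrable_translate[OF fi])
  also have "\<dots> = real (card M) * (\<Sum>mu\<in>M. (cmod (a mu))^2) * (LINT x|lborel. (cmod (f x))^2)"
    using lint_translate[OF fmb] by (simp add: sum_distrib_right)
  finally show "(LINT x|lborel. (cmod (tf_op M a f x))^2) \<le>
          real (card M) * (\<Sum>mu\<in>M. (cmod (a mu))^2) * (LINT x|lborel. (cmod (f x))^2)" .
qed

lemma L2norm_nonneg: "0 \<le> L2norm f"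
  unfolding L2norm_def by simp

lemma opnorm_bdd:
  fixes a :: "(real^'n) \<times> (real^'n) \<Rightarrow> complex"
  assumes M: "finite M"
  shows "bdd_above {L2norm (tf_op M a f) | f::real^'n \<Rightarrow> complex. f \<in> L2 \<and> L2norm f \<le> 1}"
proof (rule bdd_aboveI)
  fix y assume "y \<in> {L2norm (tf_op M a f) | f::real^'n \<Rightarrow> complex. f \<in> L2 \<and> L2norm f \<le> 1}"
  then obtain f :: "real^'n \<Rightarrow> complex" where f: "f \<in> L2" "L2norm f \<le> 1" and y: "y = L2norm (tf_op M a f)" by auto
  let ?C = "real (card M) * (\<Sum>mu\<in>M. (cmod (a mu))^2)"
  have C0: "0 \<le> ?C" by (simp add: sum_nonneg)
  have I0: "0 \<le> (LINT x|lborel. (cmod (f x))^2)" by simp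
  have "sqrt (LINT x|lborel. (cmod (f x))^2) \<le> 1" using f(2) by (simp add: L2norm_def)
  hence I1: "(LINT x|lborel. (cmod (f x))^2) \<le> 1" by simp
  have "(LINT x|lborel. (cmod (tf_op M a f x))^2) \<le> ?C * (LINT x|lborel. (cmod (f x))^2)"
    by (rule tf_op_L2(2)[OF M f(1)])
  also have "\<dots> \<le> ?C" using C0 I1 by (simp add: mult_left_le)
  finally show "y \<le> sqrt ?C" unfolding y L2norm_def by simp
qed

definition cube :: "real \<Rightarrow> (real^'n) set" where
  "cube r = cbox (\<chi> i. - r) (\<chi> i. r)"

lemma mem_cube: "x \<in> cube r \<longleftrightarrow> (\<forall>i. \<bar>x$i\<bar> \<le> r)"
  unfolding cube_def mem_box_cart abs_le_iff by (intro iff_allI) auto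

lemma measure_cube:
  assumes "0 \<le> r" shows "measure lborel (cube r :: (real^'n) set) = (2*r)^CARD('n)"
proof -
  have B: "\<forall>b\<in>(Basis::(real^'n) set). ((\<chi> i. r) - (\<chi> i. -r)) \<bullet> b = 2*r"
    by (auto simp: Basis_vec_def inner_axis)
  have B2: "\<forall>b\<in>(Basis::(real^'n) set). (\<chi> i. -r) \<bullet> b \<le> (\<chi> i. r) \<bullet> b"
    using assms by (auto simp: Basis_vec_def inner_axis)
  have "measure lborel (cube r :: (real^'n) set) = (\<Prod>b\<in>(Basis::(real^'n) set). 2*r)"
    unfolding cube_def measure_lborel_cbox_eq using B B2
    by (auto intro!: prod.cong)
  also have "\<dots> = (2*r)^CARD('n)" by simp
  finally show ?thesis .
qed

lemma cube_sets[measurable]: "cube r \<in> sets lborel"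
  unfolding cube_def by simp

lemma cube_borel[measurable]: "cube r \<in> sets borel"
  unfolding cube_def by simp

lemma cube_finite: "emeasure lborel (cube r :: (real^'n) set) < \<infinity>"
  unfolding cube_def by (rule emeasure_lborel_cbox_finite)

lemma integrable_cube: "integrable lborel (indicator (cube r) :: real^'n \<Rightarrow> real)"
  using cube_finite[of r] by (intro integrable_real_indicator) auto

lemma integrable_cube_bounded:
  fixes g :: "real^'n \<Rightarrow> complex"
  assumes "g \<in> borel_measurable lborel" "\<And>x. cmod (g x) \<le> 1"
  shows "integrable lborel (\<lambda>x. of_real (indicator (cube r) x) * g x)"
  by (rule Bochner_Integration.integrable_bound[OF integrable_cube[of r]])
     (use assms in \<open>auto intro!: AE_I2 simp: norm_mult indicator_def\<close>)

abbreviation ee :: "real \<Rightarrow> complex" where "ee t \<equiv> exp (\<i> * complex_of_real t)"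

lemma J_bound:
  fixes \<theta> :: "real^'n"
  assumes th: "\<theta> \<noteq> 0" and r: "pi / norm \<theta> \<le> r"
  shows "cmod (LINT x|lborel. of_real (indicator (cube r) x) * ee (\<theta> \<bullet> x))
     \<le> ((2*(r + pi/norm \<theta>))^CARD('n) - (2*(r - pi/norm \<theta>))^CARD('n)) / 2"
proof -
  define h where "h = pi / norm \<theta>"
  define hv where "hv = (pi / (\<theta> \<bullet> \<theta>)) *\<^sub>R \<theta>"
  have h0: "0 \<le> h" unfolding h_def by simp
  have thth: "\<theta> \<bullet> \<theta> \<noteq> 0" using th by simp
  have nhv: "norm hv = h" unfolding hv_def h_def using th
    by (simp add: power2_norm_eq_inner[symmetric] power2_eq_square)
  have thhv: "\<theta> \<bullet> hv = pi" unfolding hv_def using thth by simp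
  have comp: "\<bar>hv$i\<bar> \<le> h" for i using component_le_norm_cart[of hv i] nhv by simp
  define F where "F = (\<lambda>y::real^'n. of_real (indicator (cube r) y) * ee (\<theta> \<bullet> (y + hv)))"
  define J where "J = (LINT x|lborel. of_real (indicator (cube r) x) * ee (\<theta> \<bullet> x))"
  have Fm: "F \<in> borel_measurable borel" unfolding F_def by measurable
  have shiftJ: "(LINT x|lborel. of_real (indicator (cube r) (x - hv)) * ee (\<theta> \<bullet> x)) = - J"
  proof -
    have "(LINT x|lborel. of_real (indicator (cube r) (x - hv)) * ee (\<theta> \<bullet> x)) = (LINT x|lborel. F (x - hv))"
      unfolding F_def by simp
    also have "\<dots> = integral\<^sup>L lborel F" by (rule lint_translate[OF Fm])
    also have "\<dots> = (LINT x|lborel. - (of_real (indicator (cube r) x) * ee (\<theta> \<bullet> x)))"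
      unfolding F_def by (intro Bochner_Integration.integral_cong refl)
        (simp add: inner_add_right thhv distrib_left exp_add)
    also have "\<dots> = - J" unfolding J_def by simp
    finally show ?thesis .
  qed
  have i1: "integrable lborel (\<lambda>x. of_real (indicator (cube r) x) * ee (\<theta> \<bullet> x))"
    by (rule integrable_cube_bounded) auto
  have i2: "integrable lborel (\<lambda>x. of_real (indicator (cube r) (x - hv)) * ee (\<theta> \<bullet> x))"
  proof -
    have "integrable lborel (\<lambda>x. F (x - hv))"
      unfolding F_def by (rule integrable_translate, rule integrable_cube_bounded) auto
    thus ?thesis unfolding F_def by simp
  qed
  have "2 * J = J - (- J)" by simp
  also have "\<dots> = (LINT x|lborel. of_real (indicator (cube r) x - indicator (cube r) (x - hv)) * ee (\<theta> \<bullet> x))"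
    unfolding J_def shiftJ[symmetric, unfolded J_def]
    by (subst Bochner_Integration.integral_diff[OF i1 i2, symmetric]) (simp add: algebra_simps)
  finally have eq: "2 * J = \<dots>" .
  have small_sub: "x \<in> cube r \<and> x - hv \<in> cube r" if xs: "x \<in> cube (r - h)" for x
  proof -
    have a: "\<bar>x$i\<bar> \<le> r - h" for i using xs unfolding mem_cube by blast
    have b: "\<bar>(x - hv)$i\<bar> \<le> \<bar>x$i\<bar> + \<bar>hv$i\<bar>" for i by simp
    show ?thesis unfolding mem_cube
    proof (intro conjI allI)
      fix i show "\<bar>x$i\<bar> \<le> r" using a[of i] h0 by linarith
      show "\<bar>(x - hv)$i\<bar> \<le> r" using a[of i] b[of i] comp[of i] by linarith
    qed
  qed
  have big_sup: "x \<in> cube (r + h)" if xs: "x \<in> cube r \<or> x - hv \<in> cube r" for x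
  proof -
    have b: "\<bar>x$i\<bar> \<le> \<bar>(x - hv)$i\<bar> + \<bar>hv$i\<bar>" for i by simp
    show ?thesis unfolding mem_cube
    proof
      fix i show "\<bar>x$i\<bar> \<le> r + h"
        using xs b[of i] comp[of i] h0 unfolding mem_cube by (metis add_mono order_trans le_add_same_cancel1 add_le_cancel_left)
    qed
  qed
  have "cmod (2 * J) \<le> (LINT x|lborel. cmod (of_real (indicator (cube r) x - indicator (cube r) (x - hv)) * ee (\<theta> \<bullet> x)))"
    unfolding eq by (rule integral_norm_bound)
  also have "\<dots> \<le> (LINT x|lborel. indicator (cube (r + h)) (x::real^'n) - indicator (cube (r - h)) x)"
  proof (rule Bochner_Integration.integral_mono)
    show "integrable lborel (\<lambda>x. cmod (of_real (indicator (cube r) x - indicator (cube r) (x - hv)) * ee (\<theta> \<bullet> x)))"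
      using i1 i2 by (intro integrable_norm) (simp add: algebra_simps)
    show "integrable lborel (\<lambda>x. indicator (cube (r + h)) (x::real^'n) - indicator (cube (r - h)) x :: real)"
      by (intro Bochner_Integration.integrable_diff integrable_cube)
    fix x :: "real^'n"
    show "cmod (of_real (indicator (cube r) x - indicator (cube r) (x - hv)) * ee (\<theta> \<bullet> x))
      \<le> indicator (cube (r + h)) x - indicator (cube (r - h)) x"
      using small_sub[of x] big_sup[of x] by (auto simp: norm_mult indicator_def)
  qed
  also have "\<dots> = (2*(r + h))^CARD('n) - (2*(r - h))^CARD('n)"
    using h0 r unfolding h_def[symmetric]
    by (simp add: Bochner_Integration.integral_diff[OF integrable_cube integrable_cube] measure_cube)
  finally show ?thesis unfolding J_def h_def by (simp add: norm_mult)
qed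

definition theta :: "real \<Rightarrow> (real^'n) \<times> (real^'n) \<Rightarrow> real^'n" where
  "theta s mu = snd mu - scaleR (2* s) (fst mu)"

lemma subsingleton_finite: "(\<And>x y. x \<in> A \<Longrightarrow> y \<in> A \<Longrightarrow> x = y) \<Longrightarrow> finite A"
proof (cases "A = {}")
  case False
  then obtain x where x: "x \<in> A" by blast
  assume h: "\<And>x y. x \<in> A \<Longrightarrow> y \<in> A \<Longrightarrow> x = y"
  hence "A \<subseteq> {x}" using x by blast
  thus ?thesis using finite_subset by blast
qed simp

lemma exists_chirp:
  fixes M :: "((real^'n) \<times> (real^'n)) set"
  assumes M: "finite M"
  shows "\<exists>s. \<forall>mu\<in>M. \<forall>nu\<in>M. mu \<noteq> nu \<longrightarrow> theta s mu \<noteq> theta s nu"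
proof -
  define bad where "bad = (\<Union>mu\<in>M. \<Union>nu\<in>M - {mu}. {s. theta s mu = theta s nu})"
  have fin: "finite {s. theta s mu = theta s nu}" if "mu \<noteq> nu" for mu nu :: "(real^'n) \<times> (real^'n)"
  proof (rule subsingleton_finite)
    fix s1 s2 assume "s1 \<in> {s. theta s mu = theta s nu}" "s2 \<in> {s. theta s mu = theta s nu}"
    hence e1: "snd mu - snd nu = (2 * s1) *\<^sub>R (fst mu - fst nu)"
      and e2: "snd mu - snd nu = (2 * s2) *\<^sub>R (fst mu - fst nu)"
      by (auto simp: theta_def algebra_simps)
    hence "(2 * s1 - 2 * s2) *\<^sub>R (fst mu - fst nu) = 0" by (simp add: algebra_simps)
    hence "s1 = s2 \<or> fst mu = fst nu" by simp
    moreover have "fst mu = fst nu \<Longrightarrow> snd mu = snd nu" using e1 by simp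
    ultimately show "s1 = s2" using that prod_eqI by blast
  qed
  have "finite bad" unfolding bad_def
  proof (intro finite_UN_I)
    show "finite M" by (rule M)
    fix mu nu assume "mu \<in> M" "nu \<in> M - {mu}"
    hence "mu \<noteq> nu" by blast
    thus "finite {s. theta s mu = theta s nu}" by (rule fin)
  qed (use M in simp)
  then obtain s where "s \<notin> bad" using ex_new_if_finite[OF infinite_UNIV_char_0] by blast
  thus ?thesis unfolding bad_def by auto
qed

lemma ee_mult: "ee a * ee b = ee (a + b)"
  by (simp add: exp_add[symmetric] distrib_left)

lemma cmod_ee[simp]: "cmod (ee a) = 1" by simp

definition fL :: "real \<Rightarrow> real \<Rightarrow> real^'n \<Rightarrow> complex" where
  "fL s L x = ee (s * (x \<bullet> x)) * of_real (indicator (cube L) x / sqrt ((2*L)^CARD('n)))"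

lemma fL_meas: "fL s L \<in> borel_measurable lborel"
  unfolding fL_def by measurable

lemma fL_sq: "(cmod (fL s L (x::real^'n)))^2 = indicator (cube L) x / (2*L)^CARD('n)" if "0 < L"
proof -
  have "cmod (fL s L x) = indicator (cube L) x / sqrt ((2*L)^CARD('n))"
    using that unfolding fL_def norm_mult by (simp add: indicator_def norm_divide)
  thus ?thesis using that by (simp add: power_divide indicator_def)
qed

lemma fL_L2: assumes "0 < L" shows "fL s L \<in> (L2 :: (real^'n \<Rightarrow> complex) set)" and "L2norm (fL s L :: real^'n \<Rightarrow> complex) = 1"
proof -
  have eq: "(\<lambda>x::real^'n. (cmod (fL s L x))^2) = (\<lambda>x. indicator (cube L) x / (2*L)^CARD('n))"
    by (rule ext) (rule fL_sq[OF assms])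
  have i: "integrable lborel (\<lambda>x::real^'n. (cmod (fL s L x))^2)"
    unfolding eq by (intro integrable_divide_zero integrable_cube)
  have m: "fL s L \<in> borel_measurable (lborel :: (real^'n) measure)" by (rule fL_meas)
  show "fL s L \<in> (L2 :: (real^'n \<Rightarrow> complex) set)" unfolding L2_def mem_Collect_eq using i m by (intro conjI)
  have "(LINT x|lborel. (cmod (fL s L (x::real^'n)))^2) = (LINT x|lborel. indicator (cube L) (x::real^'n) / (2*L)^CARD('n))"
    by (simp only: eq)
  also have "\<dots> = measure lborel (cube L :: (real^'n) set) / (2*L)^CARD('n)"
    by (simp only: integral_divide_zero Bochner_Integration.integral_indicator space_lborel space_borel Int_UNIV_right)
  also have "\<dots> = 1" using assms by (simp add: measure_cube)
  finally show "L2norm (fL s L :: real^'n \<Rightarrow> complex) = 1" by (simp add: L2norm_def)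
qed

lemma shift_fL:
  fixes mu :: "(real^'n) \<times> (real^'n)"
  assumes x: "x \<in> cube (L - R)" and R: "norm (fst mu) \<le> R" and L: "0 < L"
  shows "tfshift mu (fL s L) x = ee (s * (x \<bullet> x)) / of_real (sqrt ((2*L)^CARD('n)))
           * (ee (s * (fst mu \<bullet> fst mu)) * ee (theta s mu \<bullet> x))"
proof -
  have "x - fst mu \<in> cube L"
    unfolding mem_cube
  proof
    fix i
    have "\<bar>(x - fst mu)$i\<bar> \<le> \<bar>x$i\<bar> + \<bar>fst mu $ i\<bar>" by simp
    moreover have "\<bar>x$i\<bar> \<le> L - R" using x unfolding mem_cube by blast
    moreover have "\<bar>fst mu $ i\<bar> \<le> R" using component_le_norm_cart[of "fst mu" i] R by simp
    ultimately show "\<bar>(x - fst mu)$i\<bar> \<le> L" by linarith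
  qed
  hence "tfshift mu (fL s L) x = ee (snd mu \<bullet> x) * ee (s * ((x - fst mu) \<bullet> (x - fst mu))) / of_real (sqrt ((2*L)^CARD('n)))"
    unfolding tfshift_def fL_def by simp
  also have "ee (snd mu \<bullet> x) * ee (s * ((x - fst mu) \<bullet> (x - fst mu))) =
     ee (s * (x \<bullet> x)) * (ee (s * (fst mu \<bullet> fst mu)) * ee (theta s mu \<bullet> x))"
    unfolding ee_mult theta_def
    by (rule arg_cong[where f=ee]) (simp add: inner_diff_left inner_diff_right inner_commute algebra_simps)
  finally show ?thesis by simp
qed

definition bb :: "real \<Rightarrow> ((real^'n) \<times> (real^'n) \<Rightarrow> complex) \<Rightarrow> (real^'n) \<times> (real^'n) \<Rightarrow> complex" where
  "bb s a mu = a mu * ee (s * (fst mu \<bullet> fst mu))"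

definition PP :: "((real^'n) \<times> (real^'n)) set \<Rightarrow> real \<Rightarrow> ((real^'n) \<times> (real^'n) \<Rightarrow> complex) \<Rightarrow> real^'n \<Rightarrow> complex" where
  "PP M s a x = (\<Sum>mu\<in>M. bb s a mu * ee (theta s mu \<bullet> x))"

definition JJ :: "real \<Rightarrow> real^'n \<Rightarrow> complex" where
  "JJ r th = (LINT x|lborel. of_real (indicator (cube r) x) * ee (th \<bullet> x))"

lemma cmod_bb[simp]: "cmod (bb s a mu) = cmod (a mu)"
  unfolding bb_def by (simp add: norm_mult)

lemma F1:
  fixes M :: "((real^'n) \<times> (real^'n)) set"
  assumes Rb: "\<forall>mu\<in>M. norm (fst mu) \<le> R" and L: "0 < L"
  shows "indicator (cube (L - R)) x * (cmod (PP M s a x))^2 / (2*L)^CARD('n)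
           \<le> (cmod (tf_op M a (fL s L) x))^2"
proof (cases "x \<in> cube (L - R)")
  case True
  have "tf_op M a (fL s L) x = (\<Sum>mu\<in>M. a mu * (ee (s * (x \<bullet> x)) / of_real (sqrt ((2*L)^CARD('n)))
           * (ee (s * (fst mu \<bullet> fst mu)) * ee (theta s mu \<bullet> x))))"
    unfolding tf_op_def using shift_fL[OF True _ L] Rb by (intro sum.cong refl) auto
  also have "\<dots> = ee (s * (x \<bullet> x)) / of_real (sqrt ((2*L)^CARD('n))) * PP M s a x"
    unfolding PP_def bb_def sum_distrib_left by (intro sum.cong refl) (simp add: algebra_simps)
  finally have "cmod (tf_op M a (fL s L) x) = cmod (PP M s a x) / sqrt ((2*L)^CARD('n))"
    using L by (simp add: norm_mult norm_divide)
  hence "(cmod (tf_op M a (fL s L) x))^2 = (cmod (PP M s a x))^2 / (2*L)^CARD('n)"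
    using L by (simp add: power_divide)
  thus ?thesis using True by simp
next
  case False
  thus ?thesis by simp
qed

lemma PP_sq:
  fixes M :: "((real^'n) \<times> (real^'n)) set"
  shows "complex_of_real (indicator (cube r) x * (cmod (PP M s a x))^2) =
    (\<Sum>mu\<in>M. \<Sum>nu\<in>M. (bb s a mu * cnj (bb s a nu)) *
        (of_real (indicator (cube r) x) * ee ((theta s mu - theta s nu) \<bullet> x)))"
proof -
  have c: "cnj (PP M s a x) = (\<Sum>nu\<in>M. cnj (bb s a nu) * ee (- (theta s nu \<bullet> x)))"
    unfolding PP_def by (simp add: exp_cnj)
  have "complex_of_real ((cmod (PP M s a x))^2) = PP M s a x * cnj (PP M s a x)"
    by (rule complex_norm_square)
  also have "\<dots> = (\<Sum>mu\<in>M. \<Sum>nu\<in>M. (bb s a mu * ee (theta s mu \<bullet> x)) * (cnj (bb s a nu) * ee (- (theta s nu \<bullet> x))))"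
    unfolding c by (simp add: PP_def sum_product)
  also have "\<dots> = (\<Sum>mu\<in>M. \<Sum>nu\<in>M. (bb s a mu * cnj (bb s a nu)) * ee ((theta s mu - theta s nu) \<bullet> x))"
  proof (intro sum.cong refl)
    fix mu nu
    have "ee (theta s mu \<bullet> x) * ee (- (theta s nu \<bullet> x)) = ee ((theta s mu - theta s nu) \<bullet> x)"
      unfolding ee_mult by (simp add: inner_diff_left)
    thus "(bb s a mu * ee (theta s mu \<bullet> x)) * (cnj (bb s a nu) * ee (- (theta s nu \<bullet> x))) =
        (bb s a mu * cnj (bb s a nu)) * ee ((theta s mu - theta s nu) \<bullet> x)"
      by (metis (no_types, lifting) mult.assoc mult.left_commute)
  qed
  finally have e: "complex_of_real ((cmod (PP M s a x))^2) = \<dots>" .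
  show ?thesis
    unfolding of_real_mult e sum_distrib_left by (intro sum.cong refl) (simp add: algebra_simps)
qed

lemma F2:
  fixes M :: "((real^'n) \<times> (real^'n)) set"
  assumes M: "finite M"
  shows "(LINT x|lborel. indicator (cube r) x * (cmod (PP M s a x))^2) =
     Re (\<Sum>mu\<in>M. \<Sum>nu\<in>M. (bb s a mu * cnj (bb s a nu)) * JJ r (theta s mu - theta s nu))"
proof -
  have ii: "integrable lborel (\<lambda>x::real^'n. of_real (indicator (cube r) x) * ee (th \<bullet> x))" for th :: "real^'n"
    by (rule integrable_cube_bounded) auto
  have "(LINT x|lborel. indicator (cube r) x * (cmod (PP M s a x))^2) =
      Re (complex_of_real (LINT x|lborel. indicator (cube r) x * (cmod (PP M s a x))^2))" by simp
  also have "complex_of_real (LINT x|lborel. indicator (cube r) x * (cmod (PP M s a x))^2) =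
      (LINT x|lborel. complex_of_real (indicator (cube r) x * (cmod (PP M s a x))^2))"
    by (rule integral_complex_of_real[symmetric])
  also have "\<dots> = (LINT x|lborel. (\<Sum>mu\<in>M. \<Sum>nu\<in>M. (bb s a mu * cnj (bb s a nu)) *
        (of_real (indicator (cube r) x) * ee ((theta s mu - theta s nu) \<bullet> x))))"
    by (simp only: PP_sq)
  also have "\<dots> = (\<Sum>mu\<in>M. \<Sum>nu\<in>M. (bb s a mu * cnj (bb s a nu)) * JJ r (theta s mu - theta s nu))"
    unfolding JJ_def using ii
    by (simp add: Bochner_Integration.integral_sum integrable_sum)
  finally show ?thesis .
qed

definition EE :: "real \<Rightarrow> real^'n \<Rightarrow> real" where
  "EE r th = ((2*(r + pi/norm th))^CARD('n) - (2*(r - pi/norm th))^CARD('n)) / 2"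

lemma JJ0: "0 \<le> r \<Longrightarrow> JJ r (0::real^'n) = of_real ((2*r)^CARD('n))"
  unfolding JJ_def by (simp add: measure_cube)

lemma F3:
  fixes M :: "((real^'n) \<times> (real^'n)) set"
  assumes M: "finite M" and inj: "\<forall>mu\<in>M. \<forall>nu\<in>M. mu \<noteq> nu \<longrightarrow> theta s mu \<noteq> theta s nu"
    and r: "0 \<le> r" and rh: "\<forall>mu\<in>M. \<forall>nu\<in>M. mu \<noteq> nu \<longrightarrow> pi / norm (theta s mu - theta s nu) \<le> r"
  shows "(\<Sum>mu\<in>M. (cmod (a mu))^2) * (2*r)^CARD('n)
          - (\<Sum>mu\<in>M. \<Sum>nu\<in>M - {mu}. cmod (a mu) * cmod (a nu) * EE r (theta s mu - theta s nu))
     \<le> Re (\<Sum>mu\<in>M. \<Sum>nu\<in>M. (bb s a mu * cnj (bb s a nu)) * JJ r (theta s mu - theta s nu))"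
proof -
  have one: "(cmod (a mu))^2 * (2*r)^CARD('n)
          - (\<Sum>nu\<in>M - {mu}. cmod (a mu) * cmod (a nu) * EE r (theta s mu - theta s nu))
     \<le> Re (\<Sum>nu\<in>M. (bb s a mu * cnj (bb s a nu)) * JJ r (theta s mu - theta s nu))"
    if mu: "mu \<in> M" for mu
  proof -
    have split: "(\<Sum>nu\<in>M. (bb s a mu * cnj (bb s a nu)) * JJ r (theta s mu - theta s nu)) =
      (bb s a mu * cnj (bb s a mu)) * JJ r (theta s mu - theta s mu) +
      (\<Sum>nu\<in>M - {mu}. (bb s a mu * cnj (bb s a nu)) * JJ r (theta s mu - theta s nu))"
      by (rule sum.remove[OF M mu])
    have d: "Re ((bb s a mu * cnj (bb s a mu)) * JJ r (theta s mu - theta s mu)) = (cmod (a mu))^2 * (2*r)^CARD('n)"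
    proof -
      have "bb s a mu * cnj (bb s a mu) = of_real ((cmod (a mu))^2)"
        using complex_norm_square[of "bb s a mu"] by simp
      moreover have "JJ r (0::real^'n) = of_real ((2*r)^CARD('n))" by (rule JJ0[OF r])
      ultimately show ?thesis by simp
    qed
    have o: "- (cmod (a mu) * cmod (a nu) * EE r (theta s mu - theta s nu))
        \<le> Re ((bb s a mu * cnj (bb s a nu)) * JJ r (theta s mu - theta s nu))"
      if nu: "nu \<in> M - {mu}" for nu
    proof -
      have ne: "theta s mu - theta s nu \<noteq> 0" using inj mu nu by auto
      have hr: "pi / norm (theta s mu - theta s nu) \<le> r" using rh mu nu by auto
      have "cmod (JJ r (theta s mu - theta s nu)) \<le> EE r (theta s mu - theta s nu)"
        unfolding JJ_def EE_def by (rule J_bound[OF ne hr])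
      hence "cmod ((bb s a mu * cnj (bb s a nu)) * JJ r (theta s mu - theta s nu))
          \<le> cmod (a mu) * cmod (a nu) * EE r (theta s mu - theta s nu)"
        by (simp add: norm_mult mult_left_mono)
      moreover have "- cmod ((bb s a mu * cnj (bb s a nu)) * JJ r (theta s mu - theta s nu))
          \<le> Re ((bb s a mu * cnj (bb s a nu)) * JJ r (theta s mu - theta s nu))"
        using abs_Re_le_cmod[of "(bb s a mu * cnj (bb s a nu)) * JJ r (theta s mu - theta s nu)"] by linarith
      ultimately show ?thesis by linarith
    qed
    have "- (\<Sum>nu\<in>M - {mu}. cmod (a mu) * cmod (a nu) * EE r (theta s mu - theta s nu))
        \<le> (\<Sum>nu\<in>M - {mu}. Re ((bb s a mu * cnj (bb s a nu)) * JJ r (theta s mu - theta s nu)))"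
      unfolding sum_negf[symmetric] by (rule sum_mono) (rule o)
    thus ?thesis unfolding split plus_complex.sel d Re_sum by linarith
  qed
  have "(\<Sum>mu\<in>M. (cmod (a mu))^2 * (2*r)^CARD('n)
          - (\<Sum>nu\<in>M - {mu}. cmod (a mu) * cmod (a nu) * EE r (theta s mu - theta s nu)))
     \<le> (\<Sum>mu\<in>M. Re (\<Sum>nu\<in>M. (bb s a mu * cnj (bb s a nu)) * JJ r (theta s mu - theta s nu)))"
    by (rule sum_mono) (rule one)
  thus ?thesis by (simp add: sum_subtractf sum_distrib_right)
qed

definition KK :: "((real^'n) \<times> (real^'n)) set \<Rightarrow> ((real^'n) \<times> (real^'n) \<Rightarrow> complex) \<Rightarrow> real \<Rightarrow> real \<Rightarrow> real \<Rightarrow> real" where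
  "KK M a s R L = (\<Sum>mu\<in>M. (cmod (a mu))^2) * ((2*(L - R))^CARD('n) / (2*L)^CARD('n))
     - (\<Sum>mu\<in>M. \<Sum>nu\<in>M - {mu}. cmod (a mu) * cmod (a nu) * (EE (L - R) (theta s mu - theta s nu) / (2*L)^CARD('n)))"

lemma F4:
  fixes M :: "((real^'n) \<times> (real^'n)) set"
  assumes M: "finite M" and inj: "\<forall>mu\<in>M. \<forall>nu\<in>M. mu \<noteq> nu \<longrightarrow> theta s mu \<noteq> theta s nu"
    and Rb: "\<forall>mu\<in>M. norm (fst mu) \<le> R" and L: "0 < L" "R \<le> L"
    and rh: "\<forall>mu\<in>M. \<forall>nu\<in>M. mu \<noteq> nu \<longrightarrow> pi / norm (theta s mu - theta s nu) \<le> L - R"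
  shows "KK M a s R L \<le> (LINT x|lborel. (cmod (tf_op M a (fL s L) x))^2)"
proof -
  let ?V = "(2*L)^CARD('n)"
  have V0: "0 < ?V" using L by simp
  have Ti: "integrable lborel (\<lambda>x. (cmod (tf_op M a (fL s L) x))^2)"
    using tf_op_L2(1)[OF M fL_L2(1)[OF L(1)]] by (simp add: L2_def)
  have "(LINT x|lborel. indicator (cube (L - R)) x * (cmod (PP M s a x))^2 / ?V)
      \<le> (LINT x|lborel. (cmod (tf_op M a (fL s L) x))^2)"
    by (rule integral_mono'[OF Ti]) (use F1[OF Rb L(1)] in auto)
  moreover have "(LINT x|lborel. indicator (cube (L - R)) x * (cmod (PP M s a x))^2 / ?V)
     = Re (\<Sum>mu\<in>M. \<Sum>nu\<in>M. (bb s a mu * cnj (bb s a nu)) * JJ (L - R) (theta s mu - theta s nu)) / ?V"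
    by (simp only: integral_divide_zero F2[OF M])
  moreover have "KK M a s R L \<le> Re (\<Sum>mu\<in>M. \<Sum>nu\<in>M. (bb s a mu * cnj (bb s a nu)) * JJ (L - R) (theta s mu - theta s nu)) / ?V"
  proof -
    have "KK M a s R L = ((\<Sum>mu\<in>M. (cmod (a mu))^2) * (2*(L - R))^CARD('n)
          - (\<Sum>mu\<in>M. \<Sum>nu\<in>M - {mu}. cmod (a mu) * cmod (a nu) * EE (L - R) (theta s mu - theta s nu))) / ?V"
      unfolding KK_def by (simp add: diff_divide_distrib sum_divide_distrib)
    also have "\<dots> \<le> Re (\<Sum>mu\<in>M. \<Sum>nu\<in>M. (bb s a mu * cnj (bb s a nu)) * JJ (L - R) (theta s mu - theta s nu)) / ?V"
      using F3[OF M inj _ rh] L V0 by (intro divide_right_mono) auto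
    finally show ?thesis .
  qed
  ultimately show ?thesis by linarith
qed

lemma lim1: "((\<lambda>L::real. (2*(L + c))^d / (2*L)^d) \<longlongrightarrow> 1) at_top"
proof -
  have "((\<lambda>L::real. (1 + c / L)^d) \<longlongrightarrow> (1 + 0)^d) at_top"
    by (intro tendsto_intros tendsto_divide_0[OF tendsto_const] filterlim_at_top_imp_at_infinity filterlim_ident)
  moreover have "eventually (\<lambda>L::real. (1 + c / L)^d = (2*(L + c))^d / (2*L)^d) at_top"
    using eventually_gt_at_top[of 0]
  proof eventually_elim
    case (elim L)
    hence "1 + c / L = (2*(L + c)) / (2*L)" by (simp add: field_simps)
    thus ?case by (simp add: power_divide)
  qed
  ultimately show ?thesis using tendsto_cong by fastforce
qed

lemma F5:
  fixes M :: "((real^'n) \<times> (real^'n)) set"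
  assumes M: "finite M"
  shows "((\<lambda>L. KK M a s R L) \<longlongrightarrow> (\<Sum>mu\<in>M. (cmod (a mu))^2)) at_top"
proof -
  have l1: "((\<lambda>L::real. (2*(L - R))^CARD('n) / (2*L)^CARD('n)) \<longlongrightarrow> 1) at_top"
    using lim1[of "- R" "CARD('n)"] by simp
  have l2: "((\<lambda>L::real. EE (L - R) th / (2*L)^CARD('n)) \<longlongrightarrow> 0) at_top" for th :: "real^'n"
  proof -
    have e: "(\<lambda>L::real. EE (L - R) th / (2*L)^CARD('n)) =
      (\<lambda>L. ((2*(L + (pi/norm th - R)))^CARD('n) / (2*L)^CARD('n) - (2*(L + (- pi/norm th - R)))^CARD('n) / (2*L)^CARD('n)) / 2)"
      unfolding EE_def by (rule ext) (simp add: diff_divide_distrib algebra_simps)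
    have "((\<lambda>L::real. ((2*(L + (pi/norm th - R)))^CARD('n) / (2*L)^CARD('n) - (2*(L + (- pi/norm th - R)))^CARD('n) / (2*L)^CARD('n)) / 2) \<longlongrightarrow> (1 - 1) / 2) at_top"
      by (intro tendsto_intros lim1) simp
    thus ?thesis unfolding e by simp
  qed
  have "((\<lambda>L. KK M a s R L) \<longlongrightarrow> (\<Sum>mu\<in>M. (cmod (a mu))^2) * 1
      - (\<Sum>mu\<in>M. \<Sum>nu\<in>M - {mu}. cmod (a mu) * cmod (a nu) * 0)) at_top"
    unfolding KK_def by (intro tendsto_intros l1 l2)
  thus ?thesis by simp
qed

lemma key_lower:
  fixes M :: "((real^'n) \<times> (real^'n)) set" and a :: "(real^'n) \<times> (real^'n) \<Rightarrow> complex"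
  assumes M: "finite M"
  shows "sqrt (\<Sum>mu\<in>M. (cmod (a mu))^2) \<le> opnorm_L2 (tf_op M a)"
proof -
  obtain s where inj: "\<forall>mu\<in>M. \<forall>nu\<in>M. mu \<noteq> nu \<longrightarrow> theta s mu \<noteq> theta s nu"
    using exists_chirp[OF M] by blast
  define R where "R = (\<Sum>mu\<in>M. norm (fst mu))"
  have Rb: "\<forall>mu\<in>M. norm (fst mu) \<le> R"
    unfolding R_def using M by (auto intro: member_le_sum)
  let ?S = "\<Sum>mu\<in>M. (cmod (a mu))^2"
  let ?Set = "{L2norm (tf_op M a f) | f::real^'n \<Rightarrow> complex. f \<in> L2 \<and> L2norm f \<le> 1}"
  have bdd: "bdd_above ?Set" by (rule opnorm_bdd[OF M])
  have main: "?S - e \<le> (opnorm_L2 (tf_op M a))^2 \<and> 0 \<le> opnorm_L2 (tf_op M a)" if e: "0 < e" for e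
  proof -
    have ev1: "eventually (\<lambda>L. ?S - e < KK M a s R L) at_top"
      using F5[OF M, of a s R] e by (intro order_tendstoD(1)) auto
    have ev2: "eventually (\<lambda>L. R + 1 \<le> L) at_top" by (rule eventually_ge_at_top)
    have ev3: "eventually (\<lambda>L. \<forall>mu\<in>M. \<forall>nu\<in>M. R + pi / norm (theta s mu - theta s nu) \<le> L) at_top"
      using M by (intro eventually_ball_finite ballI eventually_ge_at_top)
    from eventually_conj[OF ev1 eventually_conj[OF ev2 ev3]]
    obtain L where L1: "?S - e < KK M a s R L" and L2: "R + 1 \<le> L"
        and L3: "\<forall>mu\<in>M. \<forall>nu\<in>M. R + pi / norm (theta s mu - theta s nu) \<le> L"
      unfolding eventually_at_top_linorder by auto
    have R0: "0 \<le> R" unfolding R_def by (simp add: sum_nonneg)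
    have L0: "0 < L" using L2 R0 by linarith
    have rh: "\<forall>mu\<in>M. \<forall>nu\<in>M. mu \<noteq> nu \<longrightarrow> pi / norm (theta s mu - theta s nu) \<le> L - R"
      using L3 by force
    have K: "KK M a s R L \<le> (LINT x|lborel. (cmod (tf_op M a (fL s L) x))^2)"
      by (rule F4[OF M inj Rb L0 _ rh]) (use L2 in linarith)
    have mem: "L2norm (tf_op M a (fL s L)) \<in> ?Set"
    proof -
      have "fL s L \<in> (L2 :: (real^'n \<Rightarrow> complex) set)" by (rule fL_L2(1)[OF L0])
      moreover have "L2norm (fL s L :: real^'n \<Rightarrow> complex) = 1" by (rule fL_L2(2)[OF L0])
      ultimately have "fL s L \<in> (L2 :: (real^'n \<Rightarrow> complex) set)" "L2norm (fL s L :: real^'n \<Rightarrow> complex) \<le> 1"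
        by auto
      thus ?thesis by blast
    qed
    have le: "L2norm (tf_op M a (fL s L)) \<le> opnorm_L2 (tf_op M a)"
      unfolding opnorm_L2_def by (rule cSup_upper[OF mem bdd])
    have sq: "(L2norm (tf_op M a (fL s L)))^2 = (LINT x|lborel. (cmod (tf_op M a (fL s L) x))^2)"
      unfolding L2norm_def by simp
    have nn: "0 \<le> L2norm (tf_op M a (fL s L))" by (rule L2norm_nonneg)
    have "(L2norm (tf_op M a (fL s L)))^2 \<le> (opnorm_L2 (tf_op M a))^2"
      using le nn by (simp add: power_mono)
    thus ?thesis using L1 K sq le nn by linarith
  qed
  have "?S \<le> (opnorm_L2 (tf_op M a))^2"
    by (rule field_le_epsilon) (use main in force)
  moreover have "0 \<le> opnorm_L2 (tf_op M a)" using main[of 1] by simp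
  ultimately show ?thesis using real_sqrt_le_mono by fastforce
qed

lemma opnorm_cong:
  assumes "\<And>f. f \<in> L2 \<Longrightarrow> S f = S' f"
  shows "opnorm_L2 S = opnorm_L2 S'"
proof -
  have "{L2norm (S f) | f. f \<in> L2 \<and> L2norm f \<le> 1} = {L2norm (S' f) | f. f \<in> L2 \<and> L2norm f \<le> 1}"
    using assms by metis
  thus ?thesis unfolding opnorm_L2_def by simp
qed

lemma zero_L2: "(\<lambda>x. 0) \<in> (L2 :: (real^'n \<Rightarrow> complex) set)"
  unfolding L2_def by simp

lemma opnorm_zero: "opnorm_L2 (\<lambda>f::real^'n \<Rightarrow> complex. \<lambda>x. 0) = 0"
proof -
  have "{L2norm ((\<lambda>f::real^'n \<Rightarrow> complex. \<lambda>x::real^'n. 0::complex) f) | f::real^'n \<Rightarrow> complex. f \<in> L2 \<and> L2norm f \<le> 1} = {0}"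
    using zero_L2 by (auto simp: L2norm_def)
  thus ?thesis unfolding opnorm_L2_def by simp
qed

lemma tf_op_mono_neutral:
  assumes "finite A" "B \<subseteq> A" "\<And>mu. mu \<in> A - B \<Longrightarrow> c mu = 0"
  shows "tf_op A c g = tf_op B c g"
  unfolding tf_op_def using assms by (intro ext sum.mono_neutral_right) auto

lemma expansion_unique:
  fixes S :: "(real^'n \<Rightarrow> complex) \<Rightarrow> (real^'n \<Rightarrow> complex)"
  assumes e1: "tf_expansion S c1" and e2: "tf_expansion S c2"
  shows "c1 = c2"
proof -
  define A where "A = {mu. c1 mu \<noteq> 0} \<union> {mu. c2 mu \<noteq> 0}"
  have fA: "finite A" using e1 e2 unfolding A_def tf_expansion_def by auto
  define d where "d = (\<lambda>mu. c1 mu - c2 mu)"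
  have z: "tf_op A d f = (\<lambda>x. 0)" if f: "f \<in> L2" for f
  proof -
    have "tf_op A c1 f = tf_op {mu. c1 mu \<noteq> 0} c1 f" by (rule tf_op_mono_neutral[OF fA]) (auto simp: A_def)
    moreover have "tf_op A c2 f = tf_op {mu. c2 mu \<noteq> 0} c2 f" by (rule tf_op_mono_neutral[OF fA]) (auto simp: A_def)
    moreover have "tf_op A d f = (\<lambda>x. tf_op A c1 f x - tf_op A c2 f x)"
      unfolding tf_op_def d_def by (simp add: algebra_simps sum_subtractf)
    ultimately show ?thesis using e1 e2 f unfolding tf_expansion_def by auto
  qed
  have "sqrt (\<Sum>mu\<in>A. (cmod (d mu))^2) \<le> opnorm_L2 (tf_op A d)" by (rule key_lower[OF fA])
  also have "opnorm_L2 (tf_op A d) = opnorm_L2 (\<lambda>f::real^'n \<Rightarrow> complex. \<lambda>x::real^'n. 0::complex)"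
    by (rule opnorm_cong) (rule z)
  also have "\<dots> = 0" by (rule opnorm_zero)
  finally have "(\<Sum>mu\<in>A. (cmod (d mu))^2) = 0"
    by (metis order_antisym real_sqrt_eq_zero_cancel_iff real_sqrt_ge_zero sum_nonneg zero_le_power2)
  hence "\<forall>mu\<in>A. (cmod (d mu))^2 = 0" using fA by (subst sum_nonneg_eq_0_iff[symmetric]) auto
  hence "\<forall>mu\<in>A. c1 mu = c2 mu" unfolding d_def by simp
  thus ?thesis unfolding A_def by (intro ext) (metis (mono_tags, lifting) UnI1 UnI2 mem_Collect_eq)
qed

lemma Av_norm_eq:
  assumes "tf_expansion S c"
  shows "Av_norm v S = (\<Sum>mu\<in>{mu. c mu \<noteq> 0}. v mu * cmod (c mu))"
  unfolding Av_norm_def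
proof (rule the_equality)
  show "\<exists>c'. tf_expansion S c' \<and> (\<Sum>mu\<in>{mu. c mu \<noteq> 0}. v mu * cmod (c mu)) = (\<Sum>mu\<in>{mu. c' mu \<noteq> 0}. v mu * cmod (c' mu))"
    using assms by blast
  fix y assume "\<exists>c'. tf_expansion S c' \<and> y = (\<Sum>mu\<in>{mu. c' mu \<noteq> 0}. v mu * cmod (c' mu))"
  then obtain c' where "tf_expansion S c'" "y = (\<Sum>mu\<in>{mu. c' mu \<noteq> 0}. v mu * cmod (c' mu))" by blast
  moreover have "c' = c" using expansion_unique[OF \<open>tf_expansion S c'\<close> assms] .
  ultimately show "y = (\<Sum>mu\<in>{mu. c mu \<noteq> 0}. v mu * cmod (c mu))" by simp
qed

lemma tfshift_tfshift:
  "tfshift l (tfshift nu g) x = ee (- (snd nu \<bullet> fst l)) * tfshift (l + nu) g x"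
proof -
  have "tfshift l (tfshift nu g) x = ee (snd l \<bullet> x) * (ee (snd nu \<bullet> (x - fst l)) * g (x - fst l - fst nu))"
    unfolding tfshift_def by simp
  also have "\<dots> = (ee (snd l \<bullet> x) * ee (snd nu \<bullet> (x - fst l))) * g (x - fst l - fst nu)" by (simp add: mult.assoc)
  also have "ee (snd l \<bullet> x) * ee (snd nu \<bullet> (x - fst l)) = ee (- (snd nu \<bullet> fst l)) * ee (snd (l + nu) \<bullet> x)"
    unfolding ee_mult by (rule arg_cong[where f=ee]) (simp add: inner_diff_right inner_add_left)
  finally show ?thesis unfolding tfshift_def by (simp add: mult.assoc diff_diff_add)
qed

lemma tf_op_comp:
  fixes Lam A :: "((real^'n) \<times> (real^'n)) set"
  assumes L: "finite Lam" and A: "finite A"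
  shows "\<exists>b. \<forall>g. tf_op Lam c (tf_op A a g) = tf_op ((\<lambda>(l, nu). l + nu) ` (Lam \<times> A)) b g"
proof -
  define coef where "coef = (\<lambda>p::((real^'n) \<times> (real^'n)) \<times> ((real^'n) \<times> (real^'n)). c (fst p) * a (snd p) * ee (- (snd (snd p) \<bullet> fst (fst p))))"
  define sp where "sp = (\<lambda>p::((real^'n) \<times> (real^'n)) \<times> ((real^'n) \<times> (real^'n)). fst p + snd p)"
  define b where "b = (\<lambda>mu. \<Sum>p\<in>{p \<in> Lam \<times> A. sp p = mu}. coef p)"
  have img: "(\<lambda>(l, nu). l + nu) ` (Lam \<times> A) = sp ` (Lam \<times> A)"
    unfolding sp_def by (auto simp: case_prod_beta)
  have "tf_op Lam c (tf_op A a g) = tf_op ((\<lambda>(l, nu). l + nu) ` (Lam \<times> A)) b g" for g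
  proof
    fix x
    have "tf_op Lam c (tf_op A a g) x = (\<Sum>l\<in>Lam. \<Sum>nu\<in>A. c l * (a nu * tfshift l (tfshift nu g) x))"
      unfolding tf_op_def tfshift_def by (simp add: sum_distrib_left mult.assoc mult.left_commute)
    also have "\<dots> = (\<Sum>p\<in>Lam \<times> A. coef p * tfshift (sp p) g x)"
      unfolding sum.cartesian_product tfshift_tfshift coef_def sp_def
      by (intro sum.cong refl) (auto simp: algebra_simps)
    also have "\<dots> = (\<Sum>mu\<in>sp ` (Lam \<times> A). \<Sum>p\<in>{p \<in> Lam \<times> A. sp p = mu}. coef p * tfshift (sp p) g x)"
      by (rule sum.image_gen) (use L A in simp)
    also have "\<dots> = (\<Sum>mu\<in>sp ` (Lam \<times> A). b mu * tfshift mu g x)"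
      unfolding b_def sum_distrib_right by (intro sum.cong refl) auto
    finally show "tf_op Lam c (tf_op A a g) x = tf_op ((\<lambda>(l, nu). l + nu) ` (Lam \<times> A)) b g x"
      unfolding img tf_op_def .
  qed
  thus ?thesis by blast
qed

fun Sn :: "((real^'n) \<times> (real^'n)) set \<Rightarrow> nat \<Rightarrow> ((real^'n) \<times> (real^'n)) set" where
  "Sn Lam 0 = {0}"
| "Sn Lam (Suc m) = (\<lambda>(l, nu). l + nu) ` (Lam \<times> Sn Lam m)"

lemma Sn_finite: "finite Lam \<Longrightarrow> finite (Sn Lam m)"
  by (induction m) auto

lemma tf_op_id: "tf_op {0} (\<lambda>_. 1) g = g"
  unfolding tf_op_def tfshift_def by (simp add: zero_prod_def)

lemma tf_pow:
  assumes L: "finite Lam"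
  shows "\<exists>b. \<forall>g. (tf_op Lam c ^^ m) g = tf_op (Sn Lam m) b g"
proof (induction m)
  case 0
  show ?case using tf_op_id by (intro exI[of _ "\<lambda>_. 1"]) (simp add: tf_op_id)
next
  case (Suc m)
  then obtain b where b: "\<forall>g. (tf_op Lam c ^^ m) g = tf_op (Sn Lam m) b g" by blast
  obtain b' where b': "\<forall>g. tf_op Lam c (tf_op (Sn Lam m) b g) = tf_op (Sn Lam (Suc m)) b' g"
    using tf_op_comp[OF L Sn_finite[OF L, of m], of c b] by auto
  show ?case using b b' by (intro exI[of _ b']) simp
qed

lemma Sn_norm:
  assumes "Lam \<subseteq> cball 0 R0"
  shows "\<forall>mu\<in>Sn Lam m. norm mu \<le> real m * R0"
proof (induction m)
  case 0 show ?case by simp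
next
  case (Suc m)
  show ?case
  proof
    fix mu assume "mu \<in> Sn Lam (Suc m)"
    then obtain l nu where l: "l \<in> Lam" and nu: "nu \<in> Sn Lam m" and mu: "mu = l + nu" by auto
    have "norm mu \<le> norm l + norm nu" unfolding mu by (rule norm_triangle_ineq)
    also have "\<dots> \<le> R0 + real m * R0" using l nu Suc assms by (intro add_mono) auto
    finally show "norm mu \<le> real (Suc m) * R0" by (simp add: algebra_simps)
  qed
qed

lemma Sn_repr:
  assumes L: "finite Lam"
  shows "\<forall>mu\<in>Sn Lam m. \<exists>k\<in>Lam \<rightarrow>\<^sub>E {0..m}. mu = (\<Sum>l\<in>Lam. real (k l) *\<^sub>R l)"
proof (induction m)
  case 0
  show ?case
    by (intro ballI bexI[of _ "\<lambda>l. if l \<in> Lam then 0 else undefined"]) auto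
next
  case (Suc m)
  show ?case
  proof
    fix mu assume "mu \<in> Sn Lam (Suc m)"
    then obtain l0 nu where l0: "l0 \<in> Lam" and nu: "nu \<in> Sn Lam m" and mu: "mu = l0 + nu" by auto
    obtain k where k: "k \<in> Lam \<rightarrow>\<^sub>E {0..m}" and nuk: "nu = (\<Sum>l\<in>Lam. real (k l) *\<^sub>R l)"
      using Suc nu by blast
    define k' where "k' = (\<lambda>l. if l \<in> Lam then k l + (if l = l0 then 1 else 0) else undefined)"
    have kk: "k' \<in> Lam \<rightarrow>\<^sub>E {0..Suc m}"
    proof (rule PiE_I)
      fix l assume "l \<in> Lam"
      hence "k l \<in> {0..m}" using k by (rule PiE_mem[rotated])
      hence "k l \<le> m" by simp
      thus "k' l \<in> {0..Suc m}" using \<open>l \<in> Lam\<close> unfolding k'_def by auto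
    next
      fix l assume "l \<notin> Lam" thus "k' l = undefined" unfolding k'_def by simp
    qed
    have e1: "(\<Sum>l\<in>Lam. real (k' l) *\<^sub>R l) = (\<Sum>l\<in>Lam. real (k l) *\<^sub>R l + (if l = l0 then l else 0))"
      unfolding k'_def by (intro sum.cong refl) (auto simp: algebra_simps)
    have e2: "(\<Sum>l\<in>Lam. (if l = l0 then l else 0)) = l0"
      using L l0 by (simp add: sum.delta)
    have "(\<Sum>l\<in>Lam. real (k' l) *\<^sub>R l) = mu"
      unfolding e1 sum.distrib e2 mu nuk by (simp add: add.commute)
    thus "\<exists>k\<in>Lam \<rightarrow>\<^sub>E {0..Suc m}. mu = (\<Sum>l\<in>Lam. real (k l) *\<^sub>R l)"
      using kk by (intro bexI[of _ k']) auto
  qed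
qed

lemma Sn_card:
  assumes L: "finite Lam"
  shows "card (Sn Lam m) \<le> (m + 1) ^ card Lam"
proof -
  let ?F = "\<lambda>k. (\<Sum>l\<in>Lam. real (k l) *\<^sub>R l)"
  have "Sn Lam m \<subseteq> ?F ` (Lam \<rightarrow>\<^sub>E {0..m})" using Sn_repr[OF L, of m] by blast
  hence "card (Sn Lam m) \<le> card (?F ` (Lam \<rightarrow>\<^sub>E {0..m}))"
    by (intro card_mono finite_imageI finite_PiE L) auto
  also have "\<dots> \<le> card (Lam \<rightarrow>\<^sub>E {0..m})" by (rule card_image_le) (intro finite_PiE L, auto)
  also have "\<dots> = (m + 1) ^ card Lam" using L by (simp add: card_PiE)
  finally show ?thesis .
qed

lemma v_sum:
  fixes v :: "'a::euclidean_space \<Rightarrow> real"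
  assumes w: "weight v" and sm: "submultiplicative v" and B: "finite B"
  shows "v (\<Sum>b\<in>B. f b) \<le> (\<Prod>b\<in>B. v (f b))"
  using B
proof (induction B rule: finite_induct)
  case empty show ?case using w by (simp add: weight_def)
next
  case (insert x F)
  have "v (\<Sum>b\<in>insert x F. f b) = v (f x + (\<Sum>b\<in>F. f b))" using insert by simp
  also have "\<dots> \<le> v (f x) * v (\<Sum>b\<in>F. f b)" using sm by (simp add: submultiplicative_def)
  also have "\<dots> \<le> v (f x) * (\<Prod>b\<in>F. v (f b))"
    using insert w by (intro mult_left_mono) (auto simp: weight_def)
  finally show ?case using insert by simp
qed

lemma v_mono_scale:
  fixes v :: "'a::euclidean_space \<Rightarrow> real"
  assumes w: "weight v" and st: "\<bar>s\<bar> \<le> t"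
  shows "v (s *\<^sub>R b) \<le> v (t *\<^sub>R b)"
proof (cases "0 \<le> s")
  case True thus ?thesis using w st by (auto simp: weight_def)
next
  case False
  have "v (s *\<^sub>R b) = v (- (s *\<^sub>R b))" using w by (simp add: weight_def)
  also have "\<dots> = v ((- s) *\<^sub>R b)" by simp
  also have "\<dots> \<le> v (t *\<^sub>R b)"
  proof -
    have "0 \<le> - s" "- s \<le> t" using st False by auto
    thus ?thesis using w unfolding weight_def by blast
  qed
  finally show ?thesis .
qed

lemma v_bound:
  fixes v :: "'a::euclidean_space \<Rightarrow> real"
  assumes w: "weight v" and sm: "submultiplicative v" and x: "norm x = a"
  shows "v x \<le> (\<Prod>b\<in>Basis. v (a *\<^sub>R b))"
proof -
  have "v x = v (\<Sum>b\<in>Basis. (x \<bullet> b) *\<^sub>R b)" by (simp add: euclidean_representation)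
  also have "\<dots> \<le> (\<Prod>b\<in>Basis. v ((x \<bullet> b) *\<^sub>R b))" by (rule v_sum[OF w sm]) simp
  also have "\<dots> \<le> (\<Prod>b\<in>Basis. v (a *\<^sub>R b))"
  proof (rule prod_mono)
    fix b :: 'a assume b: "b \<in> Basis"
    have "\<bar>x \<bullet> b\<bar> \<le> a" using Basis_le_norm[OF b, of x] x by simp
    thus "0 \<le> v ((x \<bullet> b) *\<^sub>R b) \<and> v ((x \<bullet> b) *\<^sub>R b) \<le> v (a *\<^sub>R b)"
      using w v_mono_scale[OF w] by (auto simp: weight_def)
  qed
  finally show ?thesis .
qed

lemma v_le_sup:
  fixes v :: "'a::euclidean_space \<Rightarrow> real"
  assumes w: "weight v" and sm: "submultiplicative v" and a: "0 < a" and mu: "norm mu \<le> a"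
  shows "v mu \<le> sphere_sup v a"
proof -
  have bdd: "bdd_above (v ` {x. norm x = a})"
    using v_bound[OF w sm] by (intro bdd_aboveI[of _ "\<Prod>b\<in>Basis. v (a *\<^sub>R b)"]) auto
  have "\<exists>y. norm y = a \<and> v mu \<le> v y"
  proof (cases "mu = 0")
    case True
    obtain b :: 'a where b: "b \<in> Basis" using nonempty_Basis by blast
    have "v (0 *\<^sub>R (a *\<^sub>R b)) \<le> v (1 *\<^sub>R (a *\<^sub>R b))"
      using w unfolding weight_def by (meson order_refl zero_le_one)
    hence "v mu \<le> v (a *\<^sub>R b)" using True by simp
    moreover have "norm (a *\<^sub>R b) = a" using a b by simp
    ultimately show ?thesis by blast
  next
    case False
    define y where "y = (a / norm mu) *\<^sub>R mu"
    have ny: "norm y = a" unfolding y_def using False a by simp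
    have "mu = (norm mu / a) *\<^sub>R y" unfolding y_def using False a by simp
    hence "v mu = v ((norm mu / a) *\<^sub>R y)" by simp
    also have "\<dots> \<le> v (1 *\<^sub>R y)"
    proof -
      have "0 \<le> norm mu / a" "norm mu / a \<le> 1" using mu a by (auto simp: field_simps)
      thus ?thesis using w unfolding weight_def by blast
    qed
    finally show ?thesis using ny by auto
  qed
  then obtain y where "norm y = a" "v mu \<le> v y" by blast
  moreover have "v y \<le> sphere_sup v a" unfolding sphere_sup_def
    by (rule cSup_upper[OF _ bdd]) (use \<open>norm y = a\<close> in simp)
  ultimately show ?thesis by linarith
qed

theorem lemma1:
  fixes Lam :: "((real^'n) \<times> (real^'n)) set"
    and c :: "(real^'n) \<times> (real^'n) \<Rightarrow> complex"
    and R0 :: real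
    and v :: "(real^'n) \<times> (real^'n) \<Rightarrow> real"
    and n :: nat
  assumes "finite Lam"
    and "R0 > 0"
    and "Lam \<subseteq> cball 0 R0"
    and "weight v" and "submultiplicative v"
    and "n \<ge> 1"
  shows "Av_norm v (tf_op Lam c ^^ n)
     \<le> (real n + 1) powr (real (card Lam) / 2) * sphere_sup v (real n * R0)
        * opnorm_L2 (tf_op Lam c ^^ n)"
proof -
  note L = assms(1) and R0 = assms(2) and Lb = assms(3) and w = assms(4) and sm = assms(5) and n = assms(6)
  let ?T = "tf_op Lam c"
  obtain b where b: "\<forall>g. (?T ^^ n) g = tf_op (Sn Lam n) b g" using tf_pow[OF L] by blast
  define b' where "b' = (\<lambda>mu. if mu \<in> Sn Lam n then b mu else 0)"
  define A where "A = {mu. b' mu \<noteq> 0}"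
  have fS: "finite (Sn Lam n)" by (rule Sn_finite[OF L])
  have sub: "A \<subseteq> Sn Lam n" unfolding A_def b'_def by auto
  have fA: "finite A" using finite_subset[OF sub fS] .
  have eqop: "(?T ^^ n) g = tf_op A b' g" for g
  proof -
    have "(?T ^^ n) g = tf_op (Sn Lam n) b g" using b by blast
    also have "\<dots> = tf_op (Sn Lam n) b' g" unfolding tf_op_def b'_def by (intro ext sum.cong) auto
    also have "\<dots> = tf_op A b' g" by (rule tf_op_mono_neutral[OF fS sub]) (auto simp: A_def)
    finally show ?thesis .
  qed
  have exp: "tf_expansion (?T ^^ n) b'"
    unfolding tf_expansion_def using fA eqop unfolding A_def by auto
  have Av: "Av_norm v (?T ^^ n) = (\<Sum>mu\<in>A. v mu * cmod (b' mu))"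
    unfolding A_def by (rule Av_norm_eq[OF exp])
  define W where "W = sphere_sup v (real n * R0)"
  have a0: "0 < real n * R0" using n R0 by simp
  have vW: "v mu \<le> W" if "mu \<in> A" for mu
  proof -
    have "norm mu \<le> real n * R0" using Sn_norm[OF Lb, of n] sub that by auto
    thus ?thesis unfolding W_def by (rule v_le_sup[OF w sm a0])
  qed
  have W0: "0 \<le> W"
  proof -
    have "v 0 \<le> W" unfolding W_def by (rule v_le_sup[OF w sm a0]) (use a0 in simp)
    thus ?thesis using w by (simp add: weight_def)
  qed
  let ?S1 = "\<Sum>mu\<in>A. cmod (b' mu)"
  let ?S2 = "\<Sum>mu\<in>A. (cmod (b' mu))^2"
  have step1: "Av_norm v (?T ^^ n) \<le> W * ?S1"
    unfolding Av sum_distrib_left by (rule sum_mono) (use vW in \<open>auto intro: mult_right_mono\<close>)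
  have CS: "?S1^2 \<le> real (card A) * ?S2"
    using Cauchy_Schwarz_ineq_sum[of "\<lambda>_. 1::real" "\<lambda>mu. cmod (b' mu)" A] by simp
  have step2: "?S1 \<le> sqrt (real (card A)) * sqrt ?S2"
  proof -
    have "?S1 = sqrt (?S1^2)" by (simp add: sum_nonneg)
    also have "\<dots> \<le> sqrt (real (card A) * ?S2)" using CS by (rule real_sqrt_le_mono)
    finally show ?thesis by (simp add: real_sqrt_mult)
  qed
  have cardA: "real (card A) \<le> (real n + 1) ^ card Lam"
  proof -
    have "card A \<le> card (Sn Lam n)" by (rule card_mono[OF fS sub])
    also have "\<dots> \<le> (n + 1) ^ card Lam" by (rule Sn_card[OF L])
    finally have "real (card A) \<le> real ((n + 1) ^ card Lam)" by (rule of_nat_mono)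
    thus ?thesis by (simp add: add.commute)
  qed
  have pw: "(real n + 1) powr (real (card Lam) / 2) = sqrt ((real n + 1) ^ card Lam)"
  proof -
    have "(real n + 1) powr (real (card Lam) / 2) = ((real n + 1) powr real (card Lam)) powr (1/2)"
      by (simp add: powr_powr)
    also have "\<dots> = sqrt ((real n + 1) powr real (card Lam))" by (simp add: powr_half_sqrt)
    also have "\<dots> = sqrt ((real n + 1) ^ card Lam)" by (simp add: powr_realpow)
    finally show ?thesis .
  qed
  have step3: "sqrt (real (card A)) \<le> (real n + 1) powr (real (card Lam) / 2)"
    unfolding pw using cardA by (rule real_sqrt_le_mono)
  have step4: "sqrt ?S2 \<le> opnorm_L2 (?T ^^ n)"
  proof -
    have "sqrt ?S2 \<le> opnorm_L2 (tf_op A b')" by (rule key_lower[OF fA])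
    also have "opnorm_L2 (tf_op A b') = opnorm_L2 (?T ^^ n)"
      by (rule opnorm_cong) (simp add: eqop)
    finally show ?thesis .
  qed
  have "Av_norm v (?T ^^ n) \<le> W * (sqrt (real (card A)) * sqrt ?S2)"
    using step1 step2 W0 by (meson mult_left_mono order_trans)
  also have "\<dots> \<le> W * ((real n + 1) powr (real (card Lam) / 2) * opnorm_L2 (?T ^^ n))"
    using step3 step4 W0 by (intro mult_left_mono mult_mono) (auto simp: sum_nonneg)
  finally show ?thesis unfolding W_def by (simp add: mult_ac)
qed

end
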